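(* Let $\varepsilon\in(0,\tfrac14)$ and let $m>1$ be a constant such that $1-\frac1m\le\frac{\mathrm{e}-1}{2\sqrt{\pi}\,\mathrm{e}}\sqrt{\varepsilon}$. Let $F\in\mathrm{Lip}_{\rm loc}(\mathbb{R})$ satisfy $F(p)=\frac1m p^m$ for $p\in[0,1]$ and $F(p)\le p$ for $p\in[-1,0]$, and let $g(x)=\max\{1-|x|,0\}$ for $x\in\mathbb{R}$. Let $u^\varepsilon$ be the viscosity solution of $u^\varepsilon_t+F(u^\varepsilon_x)=\varepsilon u^\varepsilon_{xx}$ in $\mathbb{R}\times(0,\infty)$, $u^\varepsilon(\cdot,0)=g$, and let $u$ be the viscosity solution of $u_t+F(u_x)=0$ in $\mathbb{R}\times(0,\infty)$, $u(\cdot,0)=g$. Then \[ |u^\varepsilon(0,1)-u(0,1)|\ge\frac{\mathrm{e}-1}{2\sqrt{\pi}\,\mathrm{e}}\sqrt{\varepsilon}. \] *)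

theory Defs
  imports "HOL-Analysis.Analysis"
begin

definition spacetime :: "(real \<times> real) set" where
  "spacetime = UNIV \<times> {0<..}"

definition lip_loc :: "(real \<Rightarrow> real) \<Rightarrow> bool" where
  "lip_loc F \<longleftrightarrow> (\<forall>x. \<exists>r>0. \<exists>L. L-lipschitz_on (cball x r) F)"

definition C1_test ::
  "(real \<times> real \<Rightarrow> real) \<Rightarrow> (real \<times> real \<Rightarrow> real) \<Rightarrow> (real \<times> real \<Rightarrow> real) \<Rightarrow> bool" where
  "C1_test ph phx pht \<longleftrightarrow>
     (\<forall>z. (ph has_derivative (\<lambda>h. phx z * fst h + pht z * snd h)) (at z))
     \<and> continuous_on UNIV phx \<and> continuous_on UNIV pht"

definition C21_test ::
  "(real \<times> real \<Rightarrow> real) \<Rightarrow> (real \<times> real \<Rightarrow> real) \<Rightarrow> (real \<times> real \<Rightarrow> real)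
     \<Rightarrow> (real \<times> real \<Rightarrow> real) \<Rightarrow> bool" where
  "C21_test ph phx pht phxx \<longleftrightarrow>
     C1_test ph phx pht
     \<and> (\<forall>x t. ((\<lambda>y. phx (y, t)) has_real_derivative phxx (x, t)) (at x))
     \<and> continuous_on UNIV phxx"

definition loc_max_in :: "(real \<times> real \<Rightarrow> real) \<Rightarrow> (real \<times> real) set \<Rightarrow> real \<times> real \<Rightarrow> bool" where
  "loc_max_in w S z \<longleftrightarrow> (\<exists>r>0. \<forall>y\<in>ball z r \<inter> S. w y \<le> w z)"

definition loc_min_in :: "(real \<times> real \<Rightarrow> real) \<Rightarrow> (real \<times> real) set \<Rightarrow> real \<times> real \<Rightarrow> bool" where
  "loc_min_in w S z \<longleftrightarrow> (\<exists>r>0. \<forall>y\<in>ball z r \<inter> S. w z \<le> w y)"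

definition visc_subsol_viscous :: "real \<Rightarrow> (real \<Rightarrow> real) \<Rightarrow> (real \<times> real \<Rightarrow> real) \<Rightarrow> bool" where
  "visc_subsol_viscous eps F u \<longleftrightarrow>
     continuous_on spacetime u \<and>
     (\<forall>ph phx pht phxx z. C21_test ph phx pht phxx \<and> z \<in> spacetime
        \<and> loc_max_in (\<lambda>y. u y - ph y) spacetime z
        \<longrightarrow> pht z + F (phx z) \<le> eps * phxx z)"

definition visc_supersol_viscous :: "real \<Rightarrow> (real \<Rightarrow> real) \<Rightarrow> (real \<times> real \<Rightarrow> real) \<Rightarrow> bool" where
  "visc_supersol_viscous eps F u \<longleftrightarrow>
     continuous_on spacetime u \<and>
     (\<forall>ph phx pht phxx z. C21_test ph phx pht phxx \<and> z \<in> spacetime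
        \<and> loc_min_in (\<lambda>y. u y - ph y) spacetime z
        \<longrightarrow> pht z + F (phx z) \<ge> eps * phxx z)"

definition visc_subsol_HJ :: "(real \<Rightarrow> real) \<Rightarrow> (real \<times> real \<Rightarrow> real) \<Rightarrow> bool" where
  "visc_subsol_HJ F u \<longleftrightarrow>
     continuous_on spacetime u \<and>
     (\<forall>ph phx pht z. C1_test ph phx pht \<and> z \<in> spacetime
        \<and> loc_max_in (\<lambda>y. u y - ph y) spacetime z
        \<longrightarrow> pht z + F (phx z) \<le> 0)"

definition visc_supersol_HJ :: "(real \<Rightarrow> real) \<Rightarrow> (real \<times> real \<Rightarrow> real) \<Rightarrow> bool" where
  "visc_supersol_HJ F u \<longleftrightarrow>
     continuous_on spacetime u \<and>
     (\<forall>ph phx pht z. C1_test ph phx pht \<and> z \<in> spacetime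
        \<and> loc_min_in (\<lambda>y. u y - ph y) spacetime z
        \<longrightarrow> pht z + F (phx z) \<ge> 0)"

text \<open>Admissible class for the Cauchy problem (the standard uniqueness class):
  continuous up to t = 0, attaining the initial datum, and bounded and uniformly
  continuous on every strip \<real> \<times> [0,T].\<close>
definition cauchy_class :: "(real \<Rightarrow> real) \<Rightarrow> (real \<times> real \<Rightarrow> real) \<Rightarrow> bool" where
  "cauchy_class g u \<longleftrightarrow>
     continuous_on (UNIV \<times> {0..}) u \<and> (\<forall>x. u (x, 0) = g x) \<and>
     (\<forall>T>0. bounded (u ` (UNIV \<times> {0..T})) \<and> uniformly_continuous_on (UNIV \<times> {0..T}) u)"

definition visc_sol_viscous :: "real \<Rightarrow> (real \<Rightarrow> real) \<Rightarrow> (real \<Rightarrow> real) \<Rightarrow> (real \<times> real \<Rightarrow> real) \<Rightarrow> bool" where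
  "visc_sol_viscous eps F g u \<longleftrightarrow>
     cauchy_class g u \<and> visc_subsol_viscous eps F u \<and> visc_supersol_viscous eps F u"

definition visc_sol_HJ :: "(real \<Rightarrow> real) \<Rightarrow> (real \<Rightarrow> real) \<Rightarrow> (real \<times> real \<Rightarrow> real) \<Rightarrow> bool" where
  "visc_sol_HJ F g u \<longleftrightarrow>
     cauchy_class g u \<and> visc_subsol_HJ F u \<and> visc_supersol_HJ F u"

end

theory Submission
  imports Defs "HOL-Probability.Distributions" "HOL-Real_Asymp.Real_Asymp"
begin
definition Eg :: "real \<Rightarrow> real" where
  "Eg x = (LBINT s=0..x. exp (-(s\<^sup>2)))"

lemma Eg_deriv: "(Eg has_real_derivative exp (-(x\<^sup>2))) (at x)"
proof -
  let ?a = "-\<bar>x\<bar> - 1" and ?b = "\<bar>x\<bar> + 1"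
  have c: "continuous_on {?a..?b} (\<lambda>s. exp (-(s\<^sup>2)))" by (intro continuous_intros)
  have "((\<lambda>u. LBINT s=ereal 0..ereal u. exp (-(s\<^sup>2))) has_vector_derivative exp (-(x\<^sup>2))) (at x within {?a..?b})"
    by (rule interval_integral_FTC2[OF _ _ c]) auto
  then have "(Eg has_real_derivative exp (-(x\<^sup>2))) (at x within {?a..?b})"
    by (simp add: Eg_def[abs_def] has_real_derivative_iff_has_vector_derivative zero_ereal_def)
  moreover have "x \<in> interior {?a..?b}" by auto
  ultimately show ?thesis
    by (metis at_within_interior)
qed

lemmas Eg_deriv_chain[derivative_intros] = Eg_deriv[THEN DERIV_chain2]
lemmas Eg_fderiv[derivative_intros] = Eg_deriv[THEN DERIV_compose_FDERIV]

lemma Eg_0[simp]: "Eg 0 = 0" by (simp add: Eg_def zero_ereal_def)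

lemma Eg_odd: "Eg (-x) = - Eg x"
proof -
  have "\<forall>x. ((\<lambda>x. Eg (-x) + Eg x) has_real_derivative 0) (at x)"
    by (auto intro!: derivative_eq_intros)
  from DERIV_isconst_all[OF this, of x 0] show ?thesis by simp
qed

lemma Eg_less: "x < y \<Longrightarrow> Eg x < Eg y"
  by (rule DERIV_pos_imp_increasing) (auto intro!: Eg_deriv)

lemma Eg_mono: "mono Eg"
  by (metis Eg_less less_eq_real_def monoI)

lemma Eg_le_sqrtpi: "Eg x \<le> sqrt pi / 2"
proof (cases "x \<le> 0")
  case True
  then have "Eg x \<le> Eg 0" using monoD[OF Eg_mono True] by simp
  moreover have "0 \<le> sqrt pi / 2" by simp
  ultimately show ?thesis using Eg_0 by linarith
next
  case False
  have i1: "integrable lborel (\<lambda>s. indicator {0..} s *\<^sub>R exp (- s\<^sup>2)::real)"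
    using gaussian_moment_0 by (simp add: has_bochner_integral_iff)
  have v1: "integral\<^sup>L lborel (\<lambda>s. indicator {0..} s *\<^sub>R exp (- s\<^sup>2)::real) = sqrt pi / 2"
    using gaussian_moment_0 by (rule has_bochner_integral_integral_eq)
  have cx: "continuous_on {0..x} (\<lambda>s. exp (- s\<^sup>2)::real)" by (intro continuous_intros)
  have i2: "integrable lborel (\<lambda>s. indicator {0..x} s *\<^sub>R exp (- s\<^sup>2)::real)"
    using borel_integrable_atLeastAtMost'[OF cx] unfolding set_integrable_def .
  have "Eg x = (LBINT s:{0..x}. exp (- s\<^sup>2))"
    unfolding Eg_def zero_ereal_def by (rule interval_integral_Icc) (use False in linarith)
  also have "\<dots> = integral\<^sup>L lborel (\<lambda>s. indicator {0..x} s *\<^sub>R exp (- s\<^sup>2))"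
    unfolding set_lebesgue_integral_def ..
  also have "\<dots> \<le> integral\<^sup>L lborel (\<lambda>s. indicator {0..} s *\<^sub>R exp (- s\<^sup>2))"
    by (rule integral_mono[OF i2 i1]) (simp add: indicator_def)
  finally have "Eg x \<le> integral\<^sup>L lborel (\<lambda>s. indicator {0..} s *\<^sub>R exp (- s\<^sup>2))" .
  then show ?thesis using v1 by linarith
qed

definition Cg :: real where "Cg = (SUP n::nat. Eg (real n))"

lemma Eg_bdd: "bdd_above (range (\<lambda>n::nat. Eg (real n)))"
  by (intro bdd_aboveI2[where M="sqrt pi / 2"] Eg_le_sqrtpi)

lemma Eg_le_Cg: "Eg x \<le> Cg"
proof -
  have "Eg x \<le> Eg (real (nat \<lceil>x\<rceil>))"
    using monoD[OF Eg_mono real_nat_ceiling_ge[of x]] .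
  also have "\<dots> \<le> Cg" unfolding Cg_def by (rule cSUP_upper[OF _ Eg_bdd]) auto
  finally show ?thesis .
qed

lemma Cg_le: "Cg \<le> sqrt pi / 2"
  unfolding Cg_def by (rule cSUP_least) (simp, rule Eg_le_sqrtpi)

lemma Cg_pos: "0 < Cg"
  using Eg_less[of 0 1] Eg_le_Cg[of 1] by simp

lemma Eg_lim: "(Eg \<longlongrightarrow> Cg) at_top"
proof (rule tendsto_at_topI_sequentially_real[OF Eg_mono])
  show "(\<lambda>n. Eg (real n)) \<longlonglongrightarrow> Cg"
    unfolding Cg_def by (rule LIMSEQ_incseq_SUP[OF Eg_bdd]) (simp add: incseq_def monoD[OF Eg_mono])
qed

lemma Eg_abs_le: "\<bar>Eg x\<bar> \<le> Cg"
  using Eg_le_Cg[of x] Eg_le_Cg[of "-x"] by (simp add: Eg_odd)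

definition Nc :: "real \<Rightarrow> real" where "Nc x = 1/2 + Eg (x / sqrt 2) / (2 * Cg)"
definition nd :: "real \<Rightarrow> real" where "nd x = exp (-(x\<^sup>2)/2) / (2 * sqrt 2 * Cg)"

lemma Nc_deriv: "(Nc has_real_derivative nd x) (at x)"
proof -
  have "((\<lambda>x. 1/2 + Eg (x / sqrt 2) / (2 * Cg)) has_real_derivative
     0 + exp (- (x / sqrt 2)\<^sup>2) * (1 / sqrt 2) / (2 * Cg)) (at x)"
    by (intro derivative_intros DERIV_cdivide)
  moreover have "0 + exp (- (x / sqrt 2)\<^sup>2) * (1 / sqrt 2) / (2 * Cg) = nd x"
    by (simp add: nd_def power_divide)
  ultimately show ?thesis by (simp add: Nc_def[abs_def])
qed

lemma nd_pos: "0 < nd x" using Cg_pos by (simp add: nd_def)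
lemma nd_even: "nd (-x) = nd x" by (simp add: nd_def)
lemma nd_le0: "nd x \<le> nd 0"
  using Cg_pos by (simp add: nd_def divide_right_mono)

lemma nd_deriv: "(nd has_real_derivative (- x * nd x)) (at x)"
  unfolding nd_def[abs_def] using Cg_pos by (auto intro!: derivative_eq_intros simp: field_simps)

lemmas Nc_deriv_chain[derivative_intros] = Nc_deriv[THEN DERIV_chain2]
lemmas Nc_fderiv[derivative_intros] = Nc_deriv[THEN DERIV_compose_FDERIV]
lemmas nd_deriv_chain[derivative_intros] = nd_deriv[THEN DERIV_chain2]
lemmas nd_fderiv[derivative_intros] = nd_deriv[THEN DERIV_compose_FDERIV]

lemma Nc_sym: "Nc (-x) = 1 - Nc x"
proof -
  have "Eg (-x / sqrt 2) = - Eg (x / sqrt 2)" using Eg_odd[of "x / sqrt 2"] by simp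
  then show ?thesis using Cg_pos unfolding Nc_def by (simp add: field_simps)
qed

lemma Nc_ge0: "0 \<le> Nc x"
  using Eg_abs_le[of "x / sqrt 2"] Cg_pos by (simp add: Nc_def field_simps abs_le_iff)

lemma Nc_le1: "Nc x \<le> 1"
  using Eg_abs_le[of "x / sqrt 2"] Cg_pos by (simp add: Nc_def field_simps abs_le_iff)

lemma Nc_mono: "x \<le> y \<Longrightarrow> Nc x \<le> Nc y"
  by (rule DERIV_nonneg_imp_nondecreasing) (auto intro!: Nc_deriv less_imp_le[OF nd_pos])

lemma Nc_lim: "(Nc \<longlongrightarrow> 1) at_top"
proof -
  have "filterlim (\<lambda>x::real. (1 / sqrt 2) * x) at_top at_top"
    by (rule filterlim_tendsto_pos_mult_at_top[OF tendsto_const _ filterlim_ident]) simp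
  then have "filterlim (\<lambda>x::real. x / sqrt 2) at_top at_top" by simp
  from filterlim_compose[OF Eg_lim this]
  have "((\<lambda>x. Eg (x / sqrt 2)) \<longlongrightarrow> Cg) at_top" .
  then have "((\<lambda>x. 1/2 + Eg (x / sqrt 2) / (2 * Cg)) \<longlongrightarrow> 1/2 + Cg / (2 * Cg)) at_top"
    using Cg_pos by (intro tendsto_intros) auto
  moreover have "1/2 + Cg / (2 * Cg) = 1" using Cg_pos by simp
  ultimately show ?thesis by (simp add: Nc_def[abs_def])
qed

lemma nd_lim_aux: "((\<lambda>x. nd x) \<longlongrightarrow> 0) at_top"
  "((\<lambda>x. nd x / x) \<longlongrightarrow> 0) at_top"
  "((\<lambda>x. nd x * (1/x - 1/x^3)) \<longlongrightarrow> 0) at_top"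
proof -
  have a: "((\<lambda>x::real. exp (-(x\<^sup>2)/2)) \<longlongrightarrow> 0) at_top" by real_asymp
  have b: "((\<lambda>x::real. exp (-(x\<^sup>2)/2) / x) \<longlongrightarrow> 0) at_top" by real_asymp
  have c: "((\<lambda>x::real. exp (-(x\<^sup>2)/2) * (1/x - 1/x^3)) \<longlongrightarrow> 0) at_top" by real_asymp
  show "((\<lambda>x. nd x) \<longlongrightarrow> 0) at_top"
    using tendsto_divide_zero[OF a, of "2 * sqrt 2 * Cg"] by (simp add: nd_def)
  show "((\<lambda>x. nd x / x) \<longlongrightarrow> 0) at_top"
    using tendsto_divide_zero[OF b, of "2 * sqrt 2 * Cg"] by (simp add: nd_def ac_simps)
  show "((\<lambda>x. nd x * (1/x - 1/x^3)) \<longlongrightarrow> 0) at_top"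
    using tendsto_divide_zero[OF c, of "2 * sqrt 2 * Cg"] by (simp add: nd_def)
qed

lemma mills_upper:
  assumes "0 < a" shows "1 - Nc a \<le> nd a / a"
proof -
  define \<phi> where "\<phi> s = Nc s + nd s / a" for s
  have dec: "\<phi> b \<le> \<phi> a" if "a \<le> b" for b
  proof (rule DERIV_nonpos_imp_nonincreasing[OF that])
    fix x assume x: "a \<le> x" "x \<le> b"
    have "(\<phi> has_real_derivative nd x + (- x * nd x) / a) (at x)"
      unfolding \<phi>_def[abs_def] by (intro derivative_intros DERIV_cdivide Nc_deriv nd_deriv)
    moreover have "nd x + (- x * nd x) / a \<le> 0"
    proof -
      have "nd x * a \<le> x * nd x" using x nd_pos[of x] by (simp add: mult_left_mono mult.commute)
      then show ?thesis using assms by (simp add: field_simps)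
    qed
    ultimately show "\<exists>y. (\<phi> has_real_derivative y) (at x) \<and> y \<le> 0" by blast
  qed
  have lim: "(\<phi> \<longlongrightarrow> 1 + 0 / a) at_top"
    unfolding \<phi>_def[abs_def] using assms by (intro tendsto_intros Nc_lim nd_lim_aux) simp
  have "1 \<le> \<phi> a"
    using tendsto_le[OF trivial_limit_at_top_linorder tendsto_const lim, of "\<phi> a"] dec
    by (auto simp: eventually_at_top_linorder)
  then show ?thesis by (simp add: \<phi>_def)
qed

lemma mills_lower:
  assumes "0 < a" shows "nd a * (1/a - 1/a^3) \<le> 1 - Nc a"
proof -
  define \<psi> where "\<psi> s = Nc s + nd s * (1/s - 1/s^3)" for s
  have inc: "\<psi> a \<le> \<psi> b" if "a \<le> b" for b
  proof (rule DERIV_nonneg_imp_nondecreasing[OF that])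
    fix x assume x: "a \<le> x" "x \<le> b"
    then have x0: "x \<noteq> 0" "0 < x" using assms by auto
    have "(\<psi> has_real_derivative nd x + ((- x * nd x) * (1/x - 1/x^3) + nd x * (- (1 / x^2) + 3 / x^4))) (at x)"
      unfolding \<psi>_def[abs_def] using x0
      by (auto intro!: derivative_eq_intros Nc_deriv nd_deriv simp: field_simps power_def)
    moreover have "nd x + ((- x * nd x) * (1/x - 1/x^3) + nd x * (- (1 / x^2) + 3 / x^4)) = 3 * nd x / x^4"
      using x0 by (simp add: field_simps power_def)
    moreover have "0 \<le> 3 * nd x / x^4" using nd_pos[of x] by simp
    ultimately show "\<exists>y. (\<psi> has_real_derivative y) (at x) \<and> 0 \<le> y" by auto
  qed
  have lim: "(\<psi> \<longlongrightarrow> 1 + 0) at_top"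
    unfolding \<psi>_def[abs_def] by (intro tendsto_intros Nc_lim nd_lim_aux)
  have "\<psi> a \<le> 1"
    using tendsto_le[OF trivial_limit_at_top_linorder lim tendsto_const, of "\<psi> a"] inc
    by (auto simp: eventually_at_top_linorder)
  then show ?thesis by (simp add: \<psi>_def)
qed

definition Rt :: "real \<Rightarrow> real \<Rightarrow> real" where
  "Rt y \<sigma> = y * Nc (y / \<sigma>) + \<sigma> * nd (y / \<sigma>)"

lemma Rt_fderiv[derivative_intros]:
  fixes Y Sg :: "'a::real_normed_vector \<Rightarrow> real"
  assumes "(Y has_derivative Y') (at z within S)" "(Sg has_derivative Sg') (at z within S)" "0 < Sg z"
  shows "((\<lambda>z. Rt (Y z) (Sg z)) has_derivative
           (\<lambda>h. Nc (Y z / Sg z) * Y' h + nd (Y z / Sg z) * Sg' h)) (at z within S)"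
  unfolding Rt_def using assms
  by (auto intro!: derivative_eq_intros simp: fun_eq_iff field_simps)

lemma Rt_ge_y: assumes "0 < \<sigma>" shows "y \<le> Rt y \<sigma>"
proof (cases "y \<le> 0")
  case True
  have "0 \<le> -y * (1 - Nc (y/\<sigma>))" using True Nc_le1[of "y/\<sigma>"] by (intro mult_nonneg_nonneg) auto
  moreover have "0 \<le> \<sigma> * nd (y/\<sigma>)" using assms nd_pos[of "y/\<sigma>"] by simp
  ultimately show ?thesis unfolding Rt_def by (simp add: algebra_simps)
next
  case False
  then have "0 < y / \<sigma>" using assms by simp
  from mills_upper[OF this] have "y * (1 - Nc (y/\<sigma>)) \<le> y * (nd (y/\<sigma>) / (y/\<sigma>))"
    using False by (intro mult_left_mono) auto
  also have "\<dots> = \<sigma> * nd (y/\<sigma>)" using False assms by (simp add: field_simps)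
  finally show ?thesis unfolding Rt_def by (simp add: algebra_simps)
qed

lemma Rt_ge_0: assumes "0 < \<sigma>" shows "0 \<le> Rt y \<sigma>"
proof (cases "0 \<le> y")
  case True
  then show ?thesis using Nc_ge0[of "y/\<sigma>"] nd_pos[of "y/\<sigma>"] assms unfolding Rt_def by simp
next
  case False
  then have p: "0 < - y / \<sigma>" using assms by (simp add: divide_neg_pos)
  have "Nc (y/\<sigma>) = 1 - Nc (-y/\<sigma>)" using Nc_sym[of "-y/\<sigma>"] by simp
  also have "\<dots> \<le> nd (-y/\<sigma>) / (-y/\<sigma>)" by (rule mills_upper[OF p])
  also have "\<dots> = \<sigma> * nd (y/\<sigma>) / (-y)" using False assms nd_even[of "y/\<sigma>"] by (simp add: field_simps)
  finally have "-y * Nc (y/\<sigma>) \<le> -y * (\<sigma> * nd (y/\<sigma>) / (-y))"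
    using False by (intro mult_left_mono) auto
  also have "\<dots> = \<sigma> * nd (y/\<sigma>)" using False by simp
  finally show ?thesis unfolding Rt_def by simp
qed

lemma Rt_le: assumes "0 < \<sigma>" shows "Rt y \<sigma> \<le> max y 0 + \<sigma> * nd 0"
proof -
  have a: "\<sigma> * nd (y/\<sigma>) \<le> \<sigma> * nd 0" using assms nd_le0 by (simp add: mult_left_mono)
  show ?thesis
  proof (cases "0 \<le> y")
    case True
    then have "y * Nc (y/\<sigma>) \<le> y" using Nc_le1[of "y/\<sigma>"] mult_left_mono[of _ 1 y] by simp
    then show ?thesis using a True unfolding Rt_def by simp
  next
    case False
    then have "y * Nc (y/\<sigma>) \<le> 0" using Nc_ge0[of "y/\<sigma>"] by (simp add: mult_nonpos_nonneg)
    then show ?thesis using a False unfolding Rt_def by simp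
  qed
qed

lemma Rt_zero: "Rt 0 \<sigma> = \<sigma> * nd 0" by (simp add: Rt_def)

lemma Rt_m1: assumes "0 < \<sigma>" shows "Rt (-1) \<sigma> \<le> \<sigma>^3 * nd (1/\<sigma>)"
proof -
  have a: "0 < 1/\<sigma>" using assms by simp
  from mills_lower[OF a] have "nd (1/\<sigma>) * (\<sigma> - \<sigma>^3) \<le> 1 - Nc (1/\<sigma>)"
    by (simp add: power_one_over)
  moreover have "Nc (-1/\<sigma>) = 1 - Nc (1/\<sigma>)" using Nc_sym[of "1/\<sigma>"] by simp
  moreover have "nd (-1/\<sigma>) = nd (1/\<sigma>)" using nd_even[of "1/\<sigma>"] by simp
  ultimately show ?thesis unfolding Rt_def by (simp add: algebra_simps)
qed

definition Vf :: "real \<Rightarrow> real \<Rightarrow> real" where "Vf y \<sigma> = Rt (y + 1) \<sigma> - 2 * Rt y \<sigma>"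
definition Vy :: "real \<Rightarrow> real \<Rightarrow> real" where "Vy y \<sigma> = Nc ((y + 1) / \<sigma>) - 2 * Nc (y / \<sigma>)"
definition Vs :: "real \<Rightarrow> real \<Rightarrow> real" where "Vs y \<sigma> = nd ((y + 1) / \<sigma>) - 2 * nd (y / \<sigma>)"

lemma Vf_fderiv[derivative_intros]:
  fixes Y Sg :: "'a::real_normed_vector \<Rightarrow> real"
  assumes "(Y has_derivative Y') (at z within S)" "(Sg has_derivative Sg') (at z within S)" "0 < Sg z"
  shows "((\<lambda>z. Vf (Y z) (Sg z)) has_derivative
           (\<lambda>h. Vy (Y z) (Sg z) * Y' h + Vs (Y z) (Sg z) * Sg' h)) (at z within S)"
  unfolding Vf_def Vy_def Vs_def using assms
  by (auto intro!: derivative_eq_intros simp: fun_eq_iff field_simps)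

lemma Vy_deriv: assumes "0 < \<sigma>" shows "((\<lambda>y. Vy y \<sigma>) has_real_derivative Vs y \<sigma> / \<sigma>) (at y)"
  unfolding Vy_def Vs_def using assms
  by (auto intro!: derivative_eq_intros simp: field_simps)

lemma Vy_bounds: assumes "0 < \<sigma>" shows "-1 \<le> Vy y \<sigma>" "Vy y \<sigma> \<le> 1"
proof -
  have "Nc (y / \<sigma>) \<le> Nc ((y + 1) / \<sigma>)" using assms by (intro Nc_mono) (simp add: divide_right_mono)
  then show "-1 \<le> Vy y \<sigma>" "Vy y \<sigma> \<le> 1"
    using Nc_le1[of "(y+1)/\<sigma>"] Nc_ge0[of "y/\<sigma>"] Nc_le1[of "y/\<sigma>"] unfolding Vy_def by linarith+
qed

lemma Vf_init: assumes "0 < \<sigma>" shows "Vf y \<sigma> \<le> max (1 - \<bar>y\<bar>) 0 + \<sigma> * nd 0"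
proof -
  have "Vf y \<sigma> \<le> max (y+1) 0 + \<sigma> * nd 0 - 2 * max y 0"
    using Rt_le[OF assms, of "y+1"] Rt_ge_y[OF assms, of y] Rt_ge_0[OF assms, of y] unfolding Vf_def by linarith
  also have "\<dots> \<le> max (1 - \<bar>y\<bar>) 0 + \<sigma> * nd 0" by (auto simp: max_def)
  finally show ?thesis .
qed

lemma Vf_upper: assumes "0 < \<sigma>" shows "Vf y \<sigma> \<le> 1 + \<sigma> * nd 0"
proof -
  have "max (1 - \<bar>y\<bar>) 0 \<le> 1" by simp
  then show ?thesis using Vf_init[OF assms, of y] by linarith
qed

lemma Vf_m1: assumes "0 < \<sigma>" shows "\<sigma> * nd 0 - 2 * \<sigma>^3 * nd (1/\<sigma>) \<le> Vf (-1) \<sigma>"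
  using Rt_m1[OF assms] Rt_zero[of \<sigma>] unfolding Vf_def by simp

lemma penal_max:
  fixes w :: "real \<times> real \<Rightarrow> real"
  assumes cw: "continuous_on (UNIV \<times> {0..}) w"
    and wb: "\<And>x t. 0 \<le> t \<Longrightarrow> t \<le> 3 \<Longrightarrow> w (x, t) \<le> B - \<gamma> * \<bar>x\<bar>"
    and g: "0 < \<gamma>"
    and w0: "\<And>x. w (x, 0) \<le> 0"
    and pos: "0 < w (x0, 1)"
  shows "\<exists>K l zm. 0 < K \<and> 0 < l \<and> 0 < snd zm \<and> snd zm < 2 \<and>
     (\<exists>r>0. \<forall>y\<in>ball zm r \<inter> spacetime. w y - K * exp (l * (snd y - 2)) \<le> w zm - K * exp (l * (snd zm - 2)))"
proof -
  define d where "d = w (x0, 1)"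
  have d: "0 < d" using pos by (simp add: d_def)
  define K where "K = \<bar>B\<bar> + 1"
  have K: "0 < K" by (simp add: K_def)
  define l where "l = \<bar>ln (2 * K / d)\<bar> + 1"
  have l: "0 < l" by (simp add: l_def)
  have "exp (- l) < exp (- ln (2 * K / d))" unfolding l_def by simp
  also have "\<dots> = d / (2 * K)" using K d by (simp add: exp_minus del: ln_div)
  finally have el: "K * exp (- l) < d / 2" using K by (simp add: field_simps)
  define k where "k t = K * exp (l * (t - 2))" for t
  have k0: "0 < k t" for t using K by (simp add: k_def)
  have k2: "K \<le> k t" if "2 \<le> t" for t
  proof -
    have "1 \<le> exp (l * (t - 2))" using l that by simp
    then show ?thesis using K by (simp add: k_def)
  qed
  define \<Phi> where "\<Phi> z = w z - k (snd z)" for z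
  have \<Phi>0: "\<Phi> (x0, 1) > d / 2" using el by (simp add: \<Phi>_def k_def d_def)
  define X where "X = max (\<bar>B\<bar> / \<gamma>) \<bar>x0\<bar>"
  have farx: "\<Phi> (x, t) < 0" if "0 \<le> t" "t \<le> 3" "X < \<bar>x\<bar>" for x t
  proof -
    have "\<bar>B\<bar> / \<gamma> < \<bar>x\<bar>" using that by (simp add: X_def)
    then have "\<bar>B\<bar> < \<gamma> * \<bar>x\<bar>" using g by (simp add: field_simps)
    then show ?thesis using wb[OF that(1,2), of x] k0[of t] by (simp add: \<Phi>_def)
  qed
  have fart: "\<Phi> (x, t) < 0" if "2 \<le> t" "t \<le> 3" for x t
  proof -
    have "w (x, t) \<le> B" using wb[of t x] that g by (smt (verit) mult_nonneg_nonneg abs_ge_zero)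
    then show ?thesis using k2[OF that(1)] by (simp add: \<Phi>_def K_def)
  qed
  define S where "S = {-X..X} \<times> {0..(2::real)}"
  have cS: "compact S" unfolding S_def by (intro compact_Times compact_Icc)
  have z0S: "(x0, 1) \<in> S" unfolding S_def X_def by (auto simp: max_def)
  have cont: "continuous_on S \<Phi>"
  proof -
    have "continuous_on S w" by (rule continuous_on_subset[OF cw]) (auto simp: S_def)
    moreover have "continuous_on S (\<lambda>z. k (snd z))" unfolding k_def by (intro continuous_intros)
    ultimately show ?thesis unfolding \<Phi>_def[abs_def] by (intro continuous_intros)
  qed
  obtain zm where zm: "zm \<in> S" and mx: "\<And>y. y \<in> S \<Longrightarrow> \<Phi> y \<le> \<Phi> zm"
    using continuous_attains_sup[OF cS _ cont] z0S by blast
  have pzm: "\<Phi> zm > d / 2" using mx[OF z0S] \<Phi>0 by simp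
  obtain xm tm where zmeq: "zm = (xm, tm)" by (cases zm)
  have tm: "0 \<le> tm" "tm \<le> 2" using zm by (auto simp: zmeq S_def)
  have tm0: "tm \<noteq> 0"
  proof
    assume "tm = 0"
    then have "\<Phi> zm < 0" using w0[of xm] k0[of 0] by (simp add: zmeq \<Phi>_def)
    then show False using pzm d by simp
  qed
  have tm2: "tm \<noteq> 2"
  proof
    assume "tm = 2"
    then have "\<Phi> zm < 0" using fart[of 2 xm] by (simp add: zmeq)
    then show False using pzm d by simp
  qed
  have locmax: "\<forall>y\<in>ball zm (1/2) \<inter> spacetime. \<Phi> y \<le> \<Phi> zm"
  proof
    fix y assume y: "y \<in> ball zm (1/2) \<inter> spacetime"
    obtain xy ty where yeq: "y = (xy, ty)" by (cases y)
    have "dist ty tm < 1/2" using y dist_snd_le[of y zm] by (simp add: yeq zmeq dist_commute)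
    then have dd: "\<bar>ty - tm\<bar> < 1/2" by (simp add: dist_real_def)
    have ty: "0 < ty" "ty \<le> 3" using y by (auto simp: yeq spacetime_def)
      (use dd tm in arith)
    show "\<Phi> y \<le> \<Phi> zm"
    proof (cases "y \<in> S")
      case True then show ?thesis by (rule mx)
    next
      case False
      then have "X < \<bar>xy\<bar> \<or> 2 < ty" using ty by (auto simp: S_def yeq)
      then have "\<Phi> y < 0" using farx[of ty xy] fart[of ty xy] ty by (auto simp: yeq)
      then show ?thesis using pzm d by simp
    qed
  qed
  show ?thesis
    apply (rule exI[of _ K], rule exI[of _ l], rule exI[of _ zm])
    using K l tm tm0 tm2 locmax
    by (auto simp: zmeq \<Phi>_def k_def intro!: exI[of _ "1/2"])
qed

lemma kpen_deriv:
  "((\<lambda>z::real\<times>real. K * exp (l * (snd z - 2))) has_derivative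
      (\<lambda>h. K * l * exp (l * (snd z - 2)) * snd h)) (at z)"
  by (auto intro!: derivative_eq_intros simp: fun_eq_iff)

lemma C1_test_cont: "C1_test ph phx pht \<Longrightarrow> continuous_on S ph"
  unfolding C1_test_def
  by (intro has_derivative_continuous_on[where f'="\<lambda>z h. phx z * fst h + pht z * snd h"])
     (blast intro: has_derivative_at_withinI)

lemma bounded_real_image:
  assumes "bounded (u ` A)" obtains B where "\<And>z. z \<in> A \<Longrightarrow> \<bar>u z\<bar> \<le> (B::real)"
  using assms unfolding bounded_iff by auto

lemma HJ_compare:
  fixes F :: "real \<Rightarrow> real" and u \<psi> \<psi>x \<psi>t :: "real \<times> real \<Rightarrow> real"
  assumes sub: "visc_subsol_HJ F u" and cu: "continuous_on (UNIV \<times> {0..}) u"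
    and bd: "bounded (u ` (UNIV \<times> {0..3}))"
    and test: "C1_test \<psi> \<psi>x \<psi>t" and g: "0 < \<gamma>"
    and low: "\<And>x t. 0 \<le> t \<Longrightarrow> t \<le> 3 \<Longrightarrow> \<gamma> * \<bar>x\<bar> - C0 \<le> \<psi> (x, t)"
    and init: "\<And>x. u (x, 0) \<le> \<psi> (x, 0)"
    and strict: "\<And>z. 0 < snd z \<Longrightarrow> snd z < 2 \<Longrightarrow> 0 < \<psi>t z + F (\<psi>x z)"
  shows "u (x0, 1) \<le> \<psi> (x0, 1)"
proof (rule ccontr)
  assume "\<not> ?thesis"
  then have pos: "0 < u (x0, 1) - \<psi> (x0, 1)" by simp
  obtain Bu where Bu: "\<And>z. z \<in> UNIV \<times> {0..3} \<Longrightarrow> \<bar>u z\<bar> \<le> Bu" using bounded_real_image[OF bd] by blast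
  have cw: "continuous_on (UNIV \<times> {0..}) (\<lambda>z. u z - \<psi> z)"
    using cu C1_test_cont[OF test] by (intro continuous_intros)
  have wb: "u (x, t) - \<psi> (x, t) \<le> (Bu + C0) - \<gamma> * \<bar>x\<bar>" if "0 \<le> t" "t \<le> 3" for x t
    using Bu[of "(x, t)"] low[OF that, of x] that by auto
  have w0: "\<And>x. u (x, 0) - \<psi> (x, 0) \<le> 0" using init by simp
  from penal_max[of "\<lambda>z. u z - \<psi> z", OF cw wb g w0 pos]
  obtain K l zm where K: "0 < K" "0 < l" and zm: "0 < snd zm" "snd zm < 2"
    and ex: "\<exists>r>0. \<forall>y\<in>ball zm r \<inter> spacetime. u y - \<psi> y - K * exp (l * (snd y - 2)) \<le> u zm - \<psi> zm - K * exp (l * (snd zm - 2))"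
    by blast
  from ex obtain r where r: "0 < r" and mx: "\<And>y. y \<in> ball zm r \<inter> spacetime \<Longrightarrow>
       u y - \<psi> y - K * exp (l * (snd y - 2)) \<le> u zm - \<psi> zm - K * exp (l * (snd zm - 2))"
    by blast
  define ph where "ph z = \<psi> z + K * exp (l * (snd z - 2))" for z
  define pht where "pht z = \<psi>t z + K * l * exp (l * (snd z - 2))" for z
  have "C1_test ph \<psi>x pht"
    unfolding C1_test_def
  proof (intro conjI allI)
    fix z
    have "(\<psi> has_derivative (\<lambda>h. \<psi>x z * fst h + \<psi>t z * snd h)) (at z)"
      using test unfolding C1_test_def by blast
    from has_derivative_add[OF this kpen_deriv[of K l z]]
    show "(ph has_derivative (\<lambda>h. \<psi>x z * fst h + pht z * snd h)) (at z)"
      unfolding ph_def[abs_def] pht_def by (simp add: algebra_simps)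
  next
    show "continuous_on UNIV \<psi>x" using test unfolding C1_test_def by blast
    have "continuous_on UNIV \<psi>t" using test unfolding C1_test_def by blast
    then show "continuous_on UNIV pht" unfolding pht_def[abs_def] by (intro continuous_intros)
  qed
  moreover have "zm \<in> spacetime" using zm by (cases zm) (auto simp: spacetime_def)
  moreover have "loc_max_in (\<lambda>y. u y - ph y) spacetime zm"
    unfolding loc_max_in_def using r mx by (auto simp: ph_def algebra_simps)
  ultimately have "pht zm + F (\<psi>x zm) \<le> 0"
    using sub unfolding visc_subsol_HJ_def by blast
  moreover have "0 < \<psi>t zm + F (\<psi>x zm)" using strict zm by blast
  moreover have "0 < K * l * exp (l * (snd zm - 2))" using K by simp
  ultimately show False unfolding pht_def by linarith
qed

lemma visc_compare:
  fixes F :: "real \<Rightarrow> real" and ue v vx vt vxx :: "real \<times> real \<Rightarrow> real"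
  assumes sup: "visc_supersol_viscous eps F ue" and cu: "continuous_on (UNIV \<times> {0..}) ue"
    and bd: "bounded (ue ` (UNIV \<times> {0..3}))"
    and test: "C21_test v vx vt vxx" and g: "0 < \<gamma>"
    and low: "\<And>x t. 0 \<le> t \<Longrightarrow> t \<le> 3 \<Longrightarrow> v (x, t) \<le> C0 - \<gamma> * \<bar>x\<bar>"
    and init: "\<And>x. v (x, 0) \<le> ue (x, 0)"
    and strict: "\<And>z. 0 < snd z \<Longrightarrow> snd z < 2 \<Longrightarrow> vt z + F (vx z) < eps * vxx z"
  shows "v (x0, 1) \<le> ue (x0, 1)"
proof (rule ccontr)
  assume "\<not> ?thesis"
  then have pos: "0 < v (x0, 1) - ue (x0, 1)" by simp
  obtain Bu where Bu: "\<And>z. z \<in> UNIV \<times> {0..3} \<Longrightarrow> \<bar>ue z\<bar> \<le> Bu" using bounded_real_image[OF bd] by blast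
  have test1: "C1_test v vx vt" using test unfolding C21_test_def by blast
  have cw: "continuous_on (UNIV \<times> {0..}) (\<lambda>z. v z - ue z)"
    using cu C1_test_cont[OF test1] by (intro continuous_intros)
  have wb: "v (x, t) - ue (x, t) \<le> (Bu + C0) - \<gamma> * \<bar>x\<bar>" if "0 \<le> t" "t \<le> 3" for x t
    using Bu[of "(x, t)"] low[OF that, of x] that by auto
  have w0: "\<And>x. v (x, 0) - ue (x, 0) \<le> 0" using init by simp
  from penal_max[of "\<lambda>z. v z - ue z", OF cw wb g w0 pos]
  obtain K l zm where K: "0 < K" "0 < l" and zm: "0 < snd zm" "snd zm < 2"
    and ex: "\<exists>r>0. \<forall>y\<in>ball zm r \<inter> spacetime. v y - ue y - K * exp (l * (snd y - 2)) \<le> v zm - ue zm - K * exp (l * (snd zm - 2))"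
    by blast
  from ex obtain r where r: "0 < r" and mx: "\<And>y. y \<in> ball zm r \<inter> spacetime \<Longrightarrow>
       v y - ue y - K * exp (l * (snd y - 2)) \<le> v zm - ue zm - K * exp (l * (snd zm - 2))"
    by blast
  define ph where "ph z = v z - K * exp (l * (snd z - 2))" for z
  define pht where "pht z = vt z - K * l * exp (l * (snd z - 2))" for z
  have "C21_test ph vx pht vxx"
    unfolding C21_test_def C1_test_def
  proof (intro conjI allI)
    fix z
    have "(v has_derivative (\<lambda>h. vx z * fst h + vt z * snd h)) (at z)"
      using test unfolding C21_test_def C1_test_def by blast
    from has_derivative_diff[OF this kpen_deriv[of K l z]]
    show "(ph has_derivative (\<lambda>h. vx z * fst h + pht z * snd h)) (at z)"
      unfolding ph_def[abs_def] pht_def by (simp add: algebra_simps)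
  next
    show "continuous_on UNIV vx" using test unfolding C21_test_def C1_test_def by blast
    have "continuous_on UNIV vt" using test unfolding C21_test_def C1_test_def by blast
    then show "continuous_on UNIV pht" unfolding pht_def[abs_def] by (intro continuous_intros)
    show "continuous_on UNIV vxx" using test unfolding C21_test_def by blast
    fix x t show "((\<lambda>y. vx (y, t)) has_real_derivative vxx (x, t)) (at x)"
      using test unfolding C21_test_def by blast
  qed
  moreover have "zm \<in> spacetime" using zm by (cases zm) (auto simp: spacetime_def)
  moreover have "loc_min_in (\<lambda>y. ue y - ph y) spacetime zm"
    unfolding loc_min_in_def using r mx by (auto simp: ph_def algebra_simps)
  ultimately have "eps * vxx zm \<le> pht zm + F (vx zm)"
    using sup unfolding visc_supersol_viscous_def by blast
  moreover have "vt zm + F (vx zm) < eps * vxx zm" using strict zm by blast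
  moreover have "0 < K * l * exp (l * (snd zm - 2))" using K by simp
  ultimately show False unfolding pht_def by linarith
qed

definition Wk :: "real \<Rightarrow> real \<Rightarrow> real" where
  "Wk k y = (y + 1 + sqrt ((y + 1)\<^sup>2 + k\<^sup>2)) / 2"
definition Wk' :: "real \<Rightarrow> real \<Rightarrow> real" where
  "Wk' k y = (1 + (y + 1) / sqrt ((y + 1)\<^sup>2 + k\<^sup>2)) / 2"
definition Qf :: "real \<Rightarrow> real" where "Qf x = sqrt (1 + x\<^sup>2)"
definition Qf' :: "real \<Rightarrow> real" where "Qf' x = x / sqrt (1 + x\<^sup>2)"
definition Qf'' :: "real \<Rightarrow> real" where "Qf'' x = 1 / ((1 + x\<^sup>2) * sqrt (1 + x\<^sup>2))"

lemma aux84: "(8 + y * 8) / (2 * S) = (4 + y * 4) / (S::real)"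
  by (cases "S = 0") (simp_all add: field_simps)

lemma Wk_deriv: assumes "0 < k" shows "(Wk k has_real_derivative Wk' k y) (at y)"
proof -
  have p: "0 < (y + 1)\<^sup>2 + k\<^sup>2" using assms by (simp add: add_nonneg_pos)
  have s: "0 < sqrt ((y + 1)\<^sup>2 + k\<^sup>2)" using p by simp
  have s2: "0 < sqrt (k\<^sup>2 + (1 + y)\<^sup>2)" using s by (simp add: ac_simps)
  have ne: "k\<^sup>2 + (1 + y)\<^sup>2 \<noteq> 0" "(1 + y)\<^sup>2 + k\<^sup>2 \<noteq> 0" using p assms by (simp_all add: ac_simps)
  show ?thesis unfolding Wk_def[abs_def] Wk'_def using p s s2
    by (auto intro!: derivative_eq_intros simp: field_simps ne aux84)
qed

lemma Qf_deriv: "(Qf has_real_derivative Qf' x) (at x)"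
proof -
  have p: "0 < 1 + x\<^sup>2" by (simp add: add_pos_nonneg)
  show ?thesis unfolding Qf_def[abs_def] Qf'_def using p
    by (auto intro!: derivative_eq_intros simp: field_simps)
qed

lemma Qf'_deriv: "(Qf' has_real_derivative Qf'' x) (at x)"
proof -
  have p: "0 < 1 + x\<^sup>2" by (simp add: add_pos_nonneg)
  have s: "sqrt (1 + x\<^sup>2) * sqrt (1 + x\<^sup>2) = 1 + x\<^sup>2" using p by simp
  show ?thesis unfolding Qf'_def[abs_def] Qf''_def using p
    by (auto intro!: derivative_eq_intros simp: field_simps s power2_eq_square)
qed

lemmas Wk_fderiv[derivative_intros] = Wk_deriv[THEN DERIV_compose_FDERIV]
lemmas Qf_fderiv[derivative_intros] = Qf_deriv[THEN DERIV_compose_FDERIV]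

lemma onepx2: "0 < 1 + (x::real)\<^sup>2" by (simp add: add_pos_nonneg)
lemma sqrt_onepx2: "0 < sqrt (1 + (x::real)\<^sup>2)" using onepx2[of x] by simp

lemma Wk'_cont: "0 < k \<Longrightarrow> continuous_on UNIV (Wk' k)"
proof -
  assume k: "0 < k"
  have "\<And>y. 0 < (y + 1)\<^sup>2 + k\<^sup>2" using k by (simp add: add_nonneg_pos)
  then have "\<And>y. sqrt ((y + 1)\<^sup>2 + k\<^sup>2) \<noteq> 0" by (metis less_irrefl real_sqrt_gt_zero)
  then show ?thesis unfolding Wk'_def[abs_def] by (intro continuous_intros) auto
qed

lemma Qf'_cont: "continuous_on UNIV Qf'"
proof -
  have "\<And>x. sqrt (1 + x\<^sup>2) \<noteq> (0::real)" using sqrt_onepx2 by (metis less_irrefl)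
  then show ?thesis unfolding Qf'_def[abs_def] by (intro continuous_intros) auto
qed

lemma Qf''_cont: "continuous_on UNIV Qf''"
proof -
  have "\<And>x. sqrt (1 + x\<^sup>2) \<noteq> (0::real)" using sqrt_onepx2 by (metis less_irrefl)
  moreover have "\<And>x. 1 + x\<^sup>2 \<noteq> (0::real)" using onepx2 by (metis less_irrefl)
  ultimately show ?thesis unfolding Qf''_def[abs_def] by (intro continuous_intros) auto
qed

lemma Wk'_bounds: "0 < k \<Longrightarrow> 0 \<le> Wk' k y \<and> Wk' k y \<le> 1"
proof -
  assume k: "0 < k"
  define S where "S = sqrt ((y + 1)\<^sup>2 + k\<^sup>2)"
  have S: "0 < S" unfolding S_def using k by (simp add: add_nonneg_pos)
  have "\<bar>y + 1\<bar> \<le> S" unfolding S_def by (rule real_le_rsqrt) simp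
  then have a: "-S \<le> y + 1" "y + 1 \<le> S" by linarith+
  have b: "-1 \<le> (y + 1) / S" using a S by (simp add: le_divide_eq)
  have c: "(y + 1) / S \<le> 1" using a S by (simp add: divide_le_eq)
  have "Wk' k y = (1 + (y + 1) / S) / 2" unfolding Wk'_def S_def ..
  then show ?thesis using b c by simp
qed

lemma Wk_ge: "max (y + 1) 0 \<le> Wk k y"
proof -
  define S where "S = sqrt ((y + 1)\<^sup>2 + k\<^sup>2)"
  have "\<bar>y + 1\<bar> \<le> S" unfolding S_def by (rule real_le_rsqrt) simp
  then have a: "-(y+1) \<le> S" "y + 1 \<le> S" by linarith+
  have "max (y + 1) 0 \<le> (y + 1 + S) / 2"
  proof (cases "0 \<le> y + 1")
    case True then show ?thesis using a by (simp add: max_def)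
  next
    case False then show ?thesis using a by (simp add: max_def)
  qed
  then show ?thesis unfolding Wk_def S_def .
qed

lemma Wk_m1: "0 < k \<Longrightarrow> Wk k (-1) = k / 2" by (simp add: Wk_def)

lemma Qf_ge: "\<bar>x\<bar> \<le> Qf x" unfolding Qf_def by (rule real_le_rsqrt) simp
lemma Qf'_bound: "\<bar>Qf' x\<bar> \<le> 1"
proof -
  define S where "S = sqrt (1 + x\<^sup>2)"
  have S: "0 < S" unfolding S_def by (rule sqrt_onepx2)
  have "\<bar>x\<bar> \<le> S" unfolding S_def by (rule real_le_rsqrt) simp
  then have a: "-S \<le> x" "x \<le> S" by linarith+
  have b: "-1 \<le> x / S" using a S by (simp add: le_divide_eq)
  have c: "x / S \<le> 1" using a S by (simp add: divide_le_eq)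
  have "Qf' x = x / S" unfolding Qf'_def S_def ..
  then show ?thesis using b c by simp
qed
lemma Qf''_bound: "0 \<le> Qf'' x \<and> Qf'' x \<le> 1"
proof -
  have a: "1 \<le> 1 + x\<^sup>2" by simp
  have b: "1 \<le> sqrt (1 + x\<^sup>2)" by simp
  have "1 * 1 \<le> (1 + x\<^sup>2) * sqrt (1 + x\<^sup>2)" by (rule mult_mono[OF a b]) simp_all
  then show ?thesis unfolding Qf''_def by simp
qed

lemma F_unif:
  fixes F :: "real \<Rightarrow> real"
  assumes "continuous_on UNIV F" "0 < \<theta>"
  shows "\<exists>d>0. \<forall>p\<in>{-2..2}. \<forall>q\<in>{-2..2}. \<bar>p - q\<bar> < d \<longrightarrow> \<bar>F p - F q\<bar> < (\<theta>::real)"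
proof -
  have "uniformly_continuous_on {-2..2::real} F"
    by (rule compact_uniformly_continuous[OF continuous_on_subset[OF assms(1)]]) auto
  then obtain d where d: "d > 0" "\<forall>x\<in>{-2..2}. \<forall>x'\<in>{-2..2}. dist x' x < d \<longrightarrow> dist (F x') (F x) < \<theta>"
    using assms(2) unfolding uniformly_continuous_on_def by blast
  show ?thesis
    by (rule exI[of _ d]) (use d in \<open>simp add: dist_real_def\<close>)
qed

lemma clamp_near:
  fixes lo hi a p \<gamma> :: real
  assumes "lo \<le> a" "a \<le> hi" "\<bar>p - a\<bar> \<le> \<gamma>"
  shows "\<bar>p - max lo (min hi p)\<bar> \<le> \<gamma>" "lo \<le> max lo (min hi p)" "max lo (min hi p) \<le> hi"
proof -
  show "\<bar>p - max lo (min hi p)\<bar> \<le> \<gamma>"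
  proof (cases "p \<le> lo")
    case True then show ?thesis using assms by (simp add: max_def min_def abs_le_iff)
  next
    case False
    then show ?thesis
    proof (cases "hi \<le> p")
      case True then show ?thesis using assms False by (simp add: max_def min_def abs_le_iff)
    next
      case False2: False
      then show ?thesis using assms False by (simp add: max_def min_def)
    qed
  qed
  show "lo \<le> max lo (min hi p)" by simp
  show "max lo (min hi p) \<le> hi" using assms by simp
qed

lemma u_upper:
  fixes F :: "real \<Rightarrow> real" and u :: "real \<times> real \<Rightarrow> real"
  assumes sub: "visc_subsol_HJ F u" and cc: "cauchy_class g u"
    and gdef: "\<forall>x. g x = max (1 - \<bar>x\<bar>) 0"
    and Fc: "continuous_on UNIV F" and Fge: "\<forall>p\<in>{0..1}. p - \<delta> \<le> F p" and \<delta>0: "0 \<le> \<delta>"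
  shows "u (0, 1) \<le> \<delta>"
proof (rule field_le_epsilon)
  fix e :: real assume e: "0 < e"
  define \<theta> where "\<theta> = e / 4"
  have \<theta>: "0 < \<theta>" using e by (simp add: \<theta>_def)
  obtain d where d: "0 < d" and dF: "\<forall>p\<in>{-2..2}. \<forall>q\<in>{-2..2}. \<bar>p - q\<bar> < d \<longrightarrow> \<bar>F p - F q\<bar> < \<theta> / 4"
    using F_unif[OF Fc, of "\<theta> / 4"] \<theta> by auto
  define \<gamma> where "\<gamma> = min (\<theta> / 8) (min (d / 2) 1)"
  have \<gamma>: "0 < \<gamma>" "\<gamma> \<le> \<theta> / 8" "\<gamma> < d" "\<gamma> \<le> 1" using \<theta> d by (auto simp: \<gamma>_def)
  define \<kappa> where "\<kappa> = e / 2"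
  have \<kappa>: "0 < \<kappa>" using e by (simp add: \<kappa>_def)
  define \<psi> where "\<psi> z = Wk \<kappa> (fst z - snd z) + (\<delta> + \<theta>) * snd z + \<gamma> * Qf (fst z)" for z :: "real \<times> real"
  define \<psi>x where "\<psi>x z = Wk' \<kappa> (fst z - snd z) + \<gamma> * Qf' (fst z)" for z :: "real \<times> real"
  define \<psi>t where "\<psi>t z = - Wk' \<kappa> (fst z - snd z) + (\<delta> + \<theta>)" for z :: "real \<times> real"
  have cW: "continuous_on UNIV (\<lambda>z::real\<times>real. Wk' \<kappa> (fst z - snd z))"
    by (rule continuous_on_compose2[OF Wk'_cont[OF \<kappa>]]) (auto intro!: continuous_intros)
  have cQ: "continuous_on UNIV (\<lambda>z::real\<times>real. Qf' (fst z))"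
    by (rule continuous_on_compose2[OF Qf'_cont]) (auto intro!: continuous_intros)
  have test: "C1_test \<psi> \<psi>x \<psi>t"
    unfolding C1_test_def
  proof (intro conjI allI)
    fix z :: "real \<times> real"
    show "(\<psi> has_derivative (\<lambda>h. \<psi>x z * fst h + \<psi>t z * snd h)) (at z)"
      unfolding \<psi>_def[abs_def] \<psi>x_def \<psi>t_def using \<kappa>
      by (auto intro!: derivative_eq_intros simp: fun_eq_iff algebra_simps)
  next
    show "continuous_on UNIV \<psi>x" unfolding \<psi>x_def[abs_def] using cW cQ by (intro continuous_intros)
    show "continuous_on UNIV \<psi>t" unfolding \<psi>t_def[abs_def] using cW by (intro continuous_intros)
  qed
  have bd: "bounded (u ` (UNIV \<times> {0..3}))" using cc unfolding cauchy_class_def by auto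
  have cu: "continuous_on (UNIV \<times> {0..}) u" using cc unfolding cauchy_class_def by auto
  have low: "\<gamma> * \<bar>x\<bar> - 0 \<le> \<psi> (x, t)" if "0 \<le> t" "t \<le> 3" for x t
  proof -
    have "0 \<le> Wk \<kappa> (x - t)" using Wk_ge[of "x - t" \<kappa>] by linarith
    moreover have "0 \<le> (\<delta> + \<theta>) * t" using that \<delta>0 \<theta> by simp
    moreover have "\<gamma> * \<bar>x\<bar> \<le> \<gamma> * Qf x" using Qf_ge[of x] \<gamma> by (simp add: mult_left_mono)
    ultimately show ?thesis by (simp add: \<psi>_def)
  qed
  have init: "u (x, 0) \<le> \<psi> (x, 0)" for x
  proof -
    have "u (x, 0) = g x" using cc unfolding cauchy_class_def by auto
    also have "\<dots> \<le> max (x + 1) 0" using gdef by (auto simp: max_def)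
    also have "\<dots> \<le> Wk \<kappa> x" by (rule Wk_ge)
    also have "\<dots> \<le> \<psi> (x, 0)" using Qf_ge[of x] \<gamma> by (simp add: \<psi>_def)
    finally show ?thesis .
  qed
  have strict: "0 < \<psi>t z + F (\<psi>x z)" if "0 < snd z" "snd z < 2" for z
  proof -
    define a where "a = Wk' \<kappa> (fst z - snd z)"
    define s where "s = Qf' (fst z)"
    define p where "p = a + \<gamma> * s"
    have a: "0 \<le> a" "a \<le> 1" using Wk'_bounds[OF \<kappa>] by (auto simp: a_def)
    have s: "\<bar>s\<bar> \<le> 1" using Qf'_bound by (simp add: s_def)
    have gs: "\<bar>\<gamma> * s\<bar> \<le> \<gamma>" using s \<gamma> by (simp add: abs_mult mult_left_le)
    have pa: "\<bar>p - a\<bar> \<le> \<gamma>" using gs by (simp add: p_def)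
    define p0 where "p0 = max 0 (min 1 p)"
    have p0: "\<bar>p - p0\<bar> \<le> \<gamma>" "0 \<le> p0" "p0 \<le> 1"
      using clamp_near[OF a pa] by (simp_all add: p0_def)
    have g1: "\<gamma> \<le> 1" using \<gamma> by simp
    have prange: "p \<in> {-2..2}" "p0 \<in> {-2..2}" using p0 pa a g1 by (auto simp: abs_le_iff)
    have h1: "\<bar>F p - F p0\<bar> < \<theta> / 4" using dF prange p0(1) \<gamma>(3) by auto
    have h2: "p0 - \<delta> \<le> F p0" using Fge p0 by auto
    have "p0 - \<delta> - \<theta> / 4 < F p" using h1 h2 unfolding abs_less_iff by linarith
    then have "a + \<gamma> * s - \<gamma> - \<delta> - \<theta> / 4 < F p" using p0(1) by (simp add: p_def abs_le_iff)
    moreover have "\<psi>x z = p" by (simp add: \<psi>x_def p_def a_def s_def)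
    moreover have "\<psi>t z = - a + (\<delta> + \<theta>)" by (simp add: \<psi>t_def a_def)
    ultimately show ?thesis using gs \<gamma> by (simp add: abs_le_iff)
  qed
  have "u (0, 1) \<le> \<psi> (0, 1)"
    by (rule HJ_compare[OF sub cu bd test \<gamma>(1) low init strict])
  also have "\<psi> (0, 1) = \<kappa> / 2 + (\<delta> + \<theta>) + \<gamma>"
    using Wk_m1[OF \<kappa>] by (simp add: \<psi>_def Qf_def)
  also have "\<dots> \<le> \<delta> + e" using \<gamma> unfolding \<kappa>_def \<theta>_def by linarith
  finally show "u (0, 1) \<le> \<delta> + e" .
qed

definition sg :: "real \<Rightarrow> real \<Rightarrow> real \<Rightarrow> real" where
  "sg ep \<tau> t = (if t \<in> {0..} then sqrt (2 * ep * (t + \<tau>)) else sqrt (2 * ep * \<tau>) * exp (t / (2 * \<tau>)))"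
definition sg' :: "real \<Rightarrow> real \<Rightarrow> real \<Rightarrow> real" where
  "sg' ep \<tau> t = (if t \<in> {0..} then ep / sqrt (2 * ep * (t + \<tau>)) else sqrt (2 * ep * \<tau>) / (2 * \<tau>) * exp (t / (2 * \<tau>)))"

lemma sg_pos: "0 < ep \<Longrightarrow> 0 < \<tau> \<Longrightarrow> 0 < sg ep \<tau> t"
  by (auto simp: sg_def)

lemma sg_deriv:
  assumes ep: "0 < ep" and tau: "0 < \<tau>"
  shows "(sg ep \<tau> has_real_derivative sg' ep \<tau> t) (at t)"
proof -
  define f where "f t = sqrt (2 * ep * (t + \<tau>))" for t
  define g where "g t = sqrt (2 * ep * \<tau>) * exp (t / (2 * \<tau>))" for t
  define fd where "fd t = ep / sqrt (2 * ep * (t + \<tau>))" for t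
  define gd where "gd t = sqrt (2 * ep * \<tau>) / (2 * \<tau>) * exp (t / (2 * \<tau>))" for t
  have fD: "(f has_real_derivative fd t) (at t)" if "0 \<le> t" for t
  proof -
    have p: "0 < 2 * ep * (t + \<tau>)" using that ep tau by simp
    have s: "sqrt (2 * ep * (t + \<tau>)) * sqrt (2 * ep * (t + \<tau>)) = 2 * ep * (t + \<tau>)" using p by simp
    show ?thesis unfolding f_def[abs_def] fd_def using p
      by (auto intro!: derivative_eq_intros simp: field_simps s)
  qed
  have gD: "(g has_real_derivative gd t) (at t)" for t
    unfolding g_def[abs_def] gd_def using tau by (auto intro!: derivative_eq_intros simp: field_simps)
  have cl1: "closure {0..} = {0::real..}" by simp
  have cl2: "closure {..<0} = {..0::real}" by simp
  have eq0: "fd 0 = gd 0"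
  proof -
    define S where "S = sqrt (2 * ep * \<tau>)"
    have S: "0 < S" "S * S = 2 * ep * \<tau>" using ep tau by (simp_all add: S_def)
    have "fd 0 = ep / S" "gd 0 = S / (2 * \<tau>)" by (simp_all add: fd_def gd_def S_def)
    moreover have "ep / S = S / (2 * \<tau>)" using S tau by (simp add: field_simps)
    ultimately show ?thesis by simp
  qed
  have "((\<lambda>t. if t \<in> {0..} then f t else g t) has_derivative
         (if t \<in> {0..} then (\<lambda>h. fd t * h) else (\<lambda>h. gd t * h))) (at t within ({0..} \<union> {..<0}))"
  proof (rule has_derivative_If_within_closures)
    assume "t \<in> {0..} \<union> (closure {0..} \<inter> closure {..<0})"
    then have "0 \<le> t" by (auto simp: cl1 cl2)
    then show "(f has_derivative (\<lambda>h. fd t * h)) (at t within {0..} \<union> (closure {0..} \<inter> closure {..<0}))"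
      using fD[of t] by (auto simp: has_field_derivative_def intro: has_derivative_at_withinI)
  next
    show "(g has_derivative (\<lambda>h. gd t * h)) (at t within {..<0} \<union> (closure {0..} \<inter> closure {..<0}))"
      using gD[of t] by (auto simp: has_field_derivative_def intro: has_derivative_at_withinI)
  next
    assume "t \<in> closure {0..}" "t \<in> closure {..<0}"
    then have "t = 0" by (auto simp: cl1 cl2)
    then show "f t = g t" by (simp add: f_def g_def)
  next
    assume "t \<in> closure {0..}" "t \<in> closure {..<0}"
    then have "t = 0" by (auto simp: cl1 cl2)
    then show "(\<lambda>h. fd t * h) = (\<lambda>h. gd t * h)" using eq0 by simp
  qed auto
  moreover have "{0..} \<union> {..<0} = (UNIV :: real set)" by auto
  moreover have "(if t \<in> {0..} then (\<lambda>h. fd t * h) else (\<lambda>h. gd t * h)) = (\<lambda>h. sg' ep \<tau> t * h)"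
    by (auto simp: sg'_def fd_def gd_def)
  moreover have "(\<lambda>t. if t \<in> {0..} then f t else g t) = sg ep \<tau>"
    by (auto simp: sg_def f_def g_def fun_eq_iff)
  ultimately show ?thesis by (simp add: has_field_derivative_def)
qed

lemma sg'_cont:
  assumes ep: "0 < ep" and tau: "0 < \<tau>"
  shows "continuous_on UNIV (sg' ep \<tau>)"
proof -
  have "continuous_on UNIV (\<lambda>t. if t \<le> 0 then sqrt (2 * ep * \<tau>) / (2 * \<tau>) * exp (t / (2 * \<tau>))
          else ep / sqrt (2 * ep * (t + \<tau>)))"
  proof (rule continuous_on_cases_le)
    show "continuous_on {t \<in> UNIV. t \<le> 0} (\<lambda>t. sqrt (2 * ep * \<tau>) / (2 * \<tau>) * exp (t / (2 * \<tau>)))"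
      by (intro continuous_intros) (use tau in auto)
    have "\<forall>t\<in>{t \<in> UNIV. 0 \<le> t}. sqrt (2 * ep * (t + \<tau>)) \<noteq> 0" using ep tau by auto
    then show "continuous_on {t \<in> UNIV. 0 \<le> t} (\<lambda>t. ep / sqrt (2 * ep * (t + \<tau>)))"
      by (intro continuous_intros) auto
    show "continuous_on UNIV (\<lambda>t::real. t)" by (intro continuous_intros)
    fix t :: real assume t0: "t = 0"
    define S where "S = sqrt (2 * ep * \<tau>)"
    have S: "0 < S" "S * S = 2 * ep * \<tau>" using ep tau by (simp_all add: S_def)
    have "ep / S = S / (2 * \<tau>)" using S tau by (simp add: field_simps)
    then show "sqrt (2 * ep * \<tau>) / (2 * \<tau>) * exp (t / (2 * \<tau>)) = ep / sqrt (2 * ep * (t + \<tau>))"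
      using t0 by (simp add: S_def)
  qed
  moreover have "(\<lambda>t. if t \<le> 0 then sqrt (2 * ep * \<tau>) / (2 * \<tau>) * exp (t / (2 * \<tau>))
          else ep / sqrt (2 * ep * (t + \<tau>))) = sg' ep \<tau>"
  proof
    fix t :: real
    show "(if t \<le> 0 then sqrt (2 * ep * \<tau>) / (2 * \<tau>) * exp (t / (2 * \<tau>))
          else ep / sqrt (2 * ep * (t + \<tau>))) = sg' ep \<tau> t"
    proof (cases "t = 0")
      case True
      define S where "S = sqrt (2 * ep * \<tau>)"
      have S: "0 < S" "S * S = 2 * ep * \<tau>" using ep tau by (simp_all add: S_def)
      have "ep / S = S / (2 * \<tau>)" using S tau by (simp add: field_simps)
      then show ?thesis using True by (simp add: sg'_def S_def)
    next
      case False then show ?thesis by (auto simp: sg'_def)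
    qed
  qed
  ultimately show ?thesis by metis
qed

lemma sg_pos_t: "0 \<le> t \<Longrightarrow> sg ep \<tau> t = sqrt (2 * ep * (t + \<tau>))" by (simp add: sg_def)
lemma sg'_pos_t: "0 \<le> t \<Longrightarrow> sg' ep \<tau> t = ep / sg ep \<tau> t" by (simp add: sg_def sg'_def)

lemma Nc_cont: "continuous_on UNIV Nc"
  by (rule has_derivative_continuous_on[where f'="\<lambda>x h. nd x * h"])
     (auto intro: has_derivative_at_withinI Nc_deriv[unfolded has_field_derivative_def, simplified mult.commute])

lemma nd_cont: "continuous_on UNIV nd"
  unfolding nd_def[abs_def] using Cg_pos by (intro continuous_intros) auto

lemma Nc_cont_intro[continuous_intros]: "continuous_on S f \<Longrightarrow> continuous_on S (\<lambda>x. Nc (f x))"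
  by (rule continuous_on_compose2[OF Nc_cont]) auto
lemma nd_cont_intro[continuous_intros]: "continuous_on S f \<Longrightarrow> continuous_on S (\<lambda>x. nd (f x))"
  by (rule continuous_on_compose2[OF nd_cont]) auto
lemma Qf'_cont_intro[continuous_intros]: "continuous_on S f \<Longrightarrow> continuous_on S (\<lambda>x. Qf' (f x))"
  by (rule continuous_on_compose2[OF Qf'_cont]) auto
lemma Qf''_cont_intro[continuous_intros]: "continuous_on S f \<Longrightarrow> continuous_on S (\<lambda>x. Qf'' (f x))"
  by (rule continuous_on_compose2[OF Qf''_cont]) auto

lemma sg_cont: "0 < ep \<Longrightarrow> 0 < \<tau> \<Longrightarrow> continuous_on UNIV (sg ep \<tau>)"
  by (rule has_derivative_continuous_on[where f'="\<lambda>x h. sg' ep \<tau> x * h"])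
     (auto intro: has_derivative_at_withinI sg_deriv[unfolded has_field_derivative_def])

lemma sg_cont_intro[continuous_intros]:
  "0 < ep \<Longrightarrow> 0 < \<tau> \<Longrightarrow> continuous_on S f \<Longrightarrow> continuous_on S (\<lambda>x. sg ep \<tau> (f x))"
  by (rule continuous_on_compose2[OF sg_cont]) auto
lemma sg'_cont_intro[continuous_intros]:
  "0 < ep \<Longrightarrow> 0 < \<tau> \<Longrightarrow> continuous_on S f \<Longrightarrow> continuous_on S (\<lambda>x. sg' ep \<tau> (f x))"
  by (rule continuous_on_compose2[OF sg'_cont]) auto

lemmas sg_fderiv[derivative_intros] = sg_deriv[THEN DERIV_compose_FDERIV]
lemmas Qf'_deriv_chain[derivative_intros] = Qf'_deriv[THEN DERIV_chain2]
lemmas Vy_deriv_chain[derivative_intros] = Vy_deriv[THEN DERIV_chain2]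

lemma nd0_bound: "1 / (sqrt 2 * sqrt pi) \<le> nd 0"
proof -
  have "2 * sqrt 2 * Cg \<le> 2 * sqrt 2 * (sqrt pi / 2)" using Cg_le by simp
  then have "2 * sqrt 2 * Cg \<le> sqrt 2 * sqrt pi" by simp
  moreover have "0 < 2 * sqrt 2 * Cg" using Cg_pos by simp
  ultimately have "1 / (sqrt 2 * sqrt pi) \<le> 1 / (2 * sqrt 2 * Cg)"
    by (intro divide_left_mono) auto
  then show ?thesis by (simp add: nd_def)
qed

lemma key_tail:
  assumes "0 < \<sigma>" "\<sigma>\<^sup>2 \<le> 1/2"
  shows "2 * \<sigma>^3 * nd (1/\<sigma>) \<le> exp (-1) * (\<sigma> * nd 0)"
proof -
  have a: "1 \<le> (1/\<sigma>)\<^sup>2 / 2"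
  proof -
    have "2 * \<sigma>\<^sup>2 \<le> 1" using assms by simp
    then show ?thesis using assms by (simp add: power_one_over field_simps)
  qed
  have e: "exp (-((1/\<sigma>)\<^sup>2)/2) \<le> exp (-1)" using a by simp
  have c: "0 < 2 * sqrt 2 * Cg" using Cg_pos by simp
  have "2 * \<sigma>^3 * nd (1/\<sigma>) = \<sigma> * (2 * \<sigma>\<^sup>2) * exp (-((1/\<sigma>)\<^sup>2)/2) / (2 * sqrt 2 * Cg)"
    by (simp add: nd_def power2_eq_square power3_eq_cube)
  also have "\<dots> \<le> \<sigma> * 1 * exp (-1) / (2 * sqrt 2 * Cg)"
    using assms e c by (intro divide_right_mono mult_mono) auto
  also have "\<dots> = exp (-1) * (\<sigma> * nd 0)" by (simp add: nd_def)
  finally show ?thesis .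
qed

lemma ue_lower:
  fixes F :: "real \<Rightarrow> real" and ue :: "real \<times> real \<Rightarrow> real"
  assumes sup: "visc_supersol_viscous eps F ue" and cc: "cauchy_class g ue"
    and gdef: "\<forall>x. g x = max (1 - \<bar>x\<bar>) 0"
    and eps0: "0 < eps" and eps1: "eps < 1/4"
    and Fc: "continuous_on UNIV F" and Fle: "\<forall>p\<in>{-1..1}. F p \<le> p"
  shows "(1 - exp (-1)) * sqrt eps / sqrt pi \<le> ue (0, 1)"
proof (rule field_le_epsilon)
  fix e :: real assume e: "0 < e"
  define \<theta> where "\<theta> = e / 4"
  have \<theta>: "0 < \<theta>" using e by (simp add: \<theta>_def)
  obtain d where d: "0 < d" and dF: "\<forall>p\<in>{-2..2}. \<forall>q\<in>{-2..2}. \<bar>p - q\<bar> < d \<longrightarrow> \<bar>F p - F q\<bar> < \<theta> / 4"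
    using F_unif[OF Fc, of "\<theta> / 4"] \<theta> by auto
  define \<gamma> where "\<gamma> = min (\<theta> / 8) (min (d / 2) 1)"
  have \<gamma>: "0 < \<gamma>" "\<gamma> \<le> \<theta> / 8" "\<gamma> < d" "\<gamma> \<le> 1" using \<theta> d by (auto simp: \<gamma>_def)
  have nd0: "0 < nd 0" by (rule nd_pos)
  define \<tau> where "\<tau> = min ((1/4 - eps) / eps) ((e / (4 * nd 0))\<^sup>2 / (2 * eps))"
  have \<tau>: "0 < \<tau>" using eps0 eps1 e nd0 by (simp add: \<tau>_def)
  have \<tau>1: "eps * (1 + \<tau>) \<le> 1/4"
  proof -
    have "\<tau> \<le> (1/4 - eps) / eps" by (simp add: \<tau>_def)
    then have "eps * \<tau> \<le> 1/4 - eps" using eps0 by (simp add: field_simps)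
    then show ?thesis by (simp add: algebra_simps)
  qed
  define \<rho> where "\<rho> = sqrt (2 * eps * \<tau>) * nd 0"
  have \<rho>: "\<rho> \<le> e / 4"
  proof -
    define Q where "Q = (e / (4 * nd 0))\<^sup>2"
    have "\<tau> \<le> Q / (2 * eps)" by (simp add: \<tau>_def Q_def)
    then have "\<tau> * (2 * eps) \<le> Q" using eps0 by (simp add: pos_le_divide_eq)
    then have "2 * eps * \<tau> \<le> (e / (4 * nd 0))\<^sup>2" unfolding Q_def by (simp add: mult.commute mult.left_commute)
    then have "sqrt (2 * eps * \<tau>) \<le> sqrt ((e / (4 * nd 0))\<^sup>2)" by (rule real_sqrt_le_mono)
    also have "\<dots> = e / (4 * nd 0)" using e nd0 by simp
    finally have "sqrt (2 * eps * \<tau>) * nd 0 \<le> e / (4 * nd 0) * nd 0" using nd0 by (intro mult_right_mono) auto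
    also have "\<dots> = e / 4" using nd0 by simp
    finally show ?thesis by (simp add: \<rho>_def)
  qed
  have \<rho>0: "0 \<le> \<rho>" using nd0 eps0 \<tau> by (simp add: \<rho>_def)
  let ?s = "sg eps \<tau>" and ?s' = "sg' eps \<tau>"
  define v where "v z = Vf (fst z - snd z) (?s (snd z)) - \<rho> - \<theta> * snd z - \<gamma> * Qf (fst z)" for z :: "real \<times> real"
  define vx where "vx z = Vy (fst z - snd z) (?s (snd z)) - \<gamma> * Qf' (fst z)" for z :: "real \<times> real"
  define vt where "vt z = - Vy (fst z - snd z) (?s (snd z)) + Vs (fst z - snd z) (?s (snd z)) * ?s' (snd z) - \<theta>"
    for z :: "real \<times> real"
  define vxx where "vxx z = Vs (fst z - snd z) (?s (snd z)) / ?s (snd z) - \<gamma> * Qf'' (fst z)" for z :: "real \<times> real"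
  have spos: "\<And>t. 0 < ?s t" using sg_pos[OF eps0 \<tau>] .
  have snz: "\<And>t. ?s t \<noteq> 0" using spos by (metis less_irrefl)
  have test: "C21_test v vx vt vxx"
    unfolding C21_test_def C1_test_def
  proof (intro conjI allI)
    fix z :: "real \<times> real"
    show "(v has_derivative (\<lambda>h. vx z * fst h + vt z * snd h)) (at z)"
      unfolding v_def[abs_def] vx_def vt_def using eps0 \<tau> spos
      by (auto intro!: derivative_eq_intros simp: fun_eq_iff algebra_simps)
  next
    show "continuous_on UNIV vx" unfolding vx_def[abs_def] Vy_def using eps0 \<tau> spos
      by (intro continuous_intros) (auto simp: snz)
    show "continuous_on UNIV vt" unfolding vt_def[abs_def] Vy_def Vs_def using eps0 \<tau> spos
      by (intro continuous_intros) (auto simp: snz)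
    show "continuous_on UNIV vxx" unfolding vxx_def[abs_def] Vs_def using eps0 \<tau> spos
      by (intro continuous_intros) (auto simp: snz)
  next
    fix x t :: real
    show "((\<lambda>y. vx (y, t)) has_real_derivative vxx (x, t)) (at x)"
      unfolding vx_def vxx_def using spos[of t]
      by (auto intro!: derivative_eq_intros)
  qed
  have bd: "bounded (ue ` (UNIV \<times> {0..3}))" using cc unfolding cauchy_class_def by auto
  have cu: "continuous_on (UNIV \<times> {0..}) ue" using cc unfolding cauchy_class_def by auto
  define C0 where "C0 = 1 + sqrt (2 * eps * (3 + \<tau>)) * nd 0"
  have low: "v (x, t) \<le> C0 - \<gamma> * \<bar>x\<bar>" if "0 \<le> t" "t \<le> 3" for x t
  proof -
    have "Vf (x - t) (?s t) \<le> 1 + ?s t * nd 0" by (rule Vf_upper[OF spos])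
    also have "?s t \<le> sqrt (2 * eps * (3 + \<tau>))" using that eps0 by (simp add: sg_pos_t)
    then have "1 + ?s t * nd 0 \<le> C0" using nd0 by (simp add: C0_def mult_right_mono)
    finally have a: "Vf (x - t) (?s t) \<le> C0" .
    have "\<gamma> * \<bar>x\<bar> \<le> \<gamma> * Qf x" using Qf_ge[of x] \<gamma> by (simp add: mult_left_mono)
    moreover have "0 \<le> \<theta> * t" using \<theta> that by simp
    ultimately show ?thesis using a \<rho>0 by (simp add: v_def)
  qed
  have init: "v (x, 0) \<le> ue (x, 0)" for x
  proof -
    have s0: "?s 0 = sqrt (2 * eps * \<tau>)" by (simp add: sg_pos_t)
    have "Vf x (?s 0) \<le> max (1 - \<bar>x\<bar>) 0 + ?s 0 * nd 0" by (rule Vf_init[OF spos])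
    also have "\<dots> = g x + \<rho>" using gdef s0 by (simp add: \<rho>_def)
    finally have "Vf x (?s 0) \<le> g x + \<rho>" .
    moreover have "0 \<le> \<gamma> * Qf x" using \<gamma> Qf_ge[of x] by simp
    moreover have "ue (x, 0) = g x" using cc unfolding cauchy_class_def by auto
    ultimately show ?thesis by (simp add: v_def)
  qed
  have strict: "vt z + F (vx z) < eps * vxx z" if "0 < snd z" "snd z < 2" for z
  proof -
    define t where "t = snd z"
    define y where "y = fst z - snd z"
    define a where "a = Vy y (?s t)"
    define b where "b = Vs y (?s t)"
    define s where "s = - Qf' (fst z)"
    define p where "p = a + \<gamma> * s"
    have a: "-1 \<le> a" "a \<le> 1" using Vy_bounds[OF spos] by (auto simp: a_def)
    have s: "\<bar>s\<bar> \<le> 1" using Qf'_bound by (simp add: s_def)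
    have gs: "\<bar>\<gamma> * s\<bar> \<le> \<gamma>" using s \<gamma> by (simp add: abs_mult mult_left_le)
    have pa: "\<bar>p - a\<bar> \<le> \<gamma>" using gs by (simp add: p_def)
    define p0 where "p0 = max (-1) (min 1 p)"
    have p0: "\<bar>p - p0\<bar> \<le> \<gamma>" "-1 \<le> p0" "p0 \<le> 1"
      using clamp_near[OF a pa] by (simp_all add: p0_def)
    have prange: "p \<in> {-2..2}" "p0 \<in> {-2..2}" using p0 pa a \<gamma>(4) by (auto simp: abs_le_iff)
    have h1: "\<bar>F p - F p0\<bar> < \<theta> / 4" using dF prange p0(1) \<gamma>(3) by auto
    have h2: "F p0 \<le> p0" using Fle p0 by auto
    have Fp: "F p < a + \<gamma> * s + \<gamma> + \<theta> / 4" using h1 h2 p0(1) unfolding abs_less_iff abs_le_iff p_def by linarith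
    have vxz: "vx z = p" by (simp add: vx_def p_def a_def s_def y_def t_def)
    have s'z: "?s' t = eps / ?s t" using that by (simp add: t_def sg'_pos_t)
    have vtz: "vt z = - a + b * (eps / ?s t) - \<theta>" using s'z by (simp add: vt_def a_def b_def y_def t_def)
    have vxxz: "vxx z = b / ?s t - \<gamma> * Qf'' (fst z)" by (simp add: vxx_def b_def y_def t_def)
    have q: "0 \<le> Qf'' (fst z)" "Qf'' (fst z) \<le> 1" using Qf''_bound by auto
    have "eps * (\<gamma> * Qf'' (fst z)) \<le> 1 * \<gamma>" using eps0 eps1 q \<gamma> by (intro mult_mono) (auto simp: mult_le_one)
    moreover have "b * (eps / ?s t) = eps * (b / ?s t)" by simp
    moreover have "eps * vxx z = eps * (b / ?s t) - eps * (\<gamma> * Qf'' (fst z))"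
      by (simp add: vxxz right_diff_distrib)
    moreover have "\<gamma> * s \<le> \<gamma>" using gs by (simp add: abs_le_iff)
    moreover have "F (vx z) = F p" using vxz by simp
    ultimately show ?thesis using vtz Fp \<gamma>(2) \<theta> by linarith
  qed
  have main: "v (0, 1) \<le> ue (0, 1)"
    by (rule visc_compare[OF sup cu bd test \<gamma>(1) low init strict])
  define \<sigma>1 where "\<sigma>1 = sqrt (2 * eps * (1 + \<tau>))"
  have s1: "?s 1 = \<sigma>1" by (simp add: sg_pos_t \<sigma>1_def)
  have \<sigma>1p: "0 < \<sigma>1" using eps0 \<tau> by (simp add: \<sigma>1_def)
  have \<sigma>1sq: "\<sigma>1\<^sup>2 \<le> 1/2" using \<tau>1 eps0 \<tau> by (simp add: \<sigma>1_def)
  have "\<sigma>1 * nd 0 - exp (-1) * (\<sigma>1 * nd 0) \<le> \<sigma>1 * nd 0 - 2 * \<sigma>1^3 * nd (1/\<sigma>1)"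
    using key_tail[OF \<sigma>1p \<sigma>1sq] by simp
  also have "\<dots> \<le> Vf (-1) \<sigma>1" by (rule Vf_m1[OF \<sigma>1p])
  finally have vf: "(1 - exp (-1)) * (\<sigma>1 * nd 0) \<le> Vf (-1) \<sigma>1" by (simp add: algebra_simps)
  have "sqrt eps / sqrt pi \<le> \<sigma>1 * nd 0"
  proof -
    have "sqrt (2 * eps) \<le> \<sigma>1" using eps0 \<tau> by (simp add: \<sigma>1_def)
    then have "sqrt (2 * eps) * (1 / (sqrt 2 * sqrt pi)) \<le> \<sigma>1 * nd 0"
      using nd0_bound \<sigma>1p by (intro mult_mono) auto
    moreover have "sqrt (2 * eps) * (1 / (sqrt 2 * sqrt pi)) = sqrt eps / sqrt pi"
      by (simp add: real_sqrt_mult)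
    ultimately show ?thesis by simp
  qed
  then have "(1 - exp (-1)) * (sqrt eps / sqrt pi) \<le> (1 - exp (-1)) * (\<sigma>1 * nd 0)"
    by (intro mult_left_mono) auto
  with vf have "(1 - exp (-1)) * sqrt eps / sqrt pi \<le> Vf (-1) \<sigma>1" by simp
  moreover have "v (0, 1) = Vf (-1) \<sigma>1 - \<rho> - \<theta> - \<gamma>" using s1 by (simp add: v_def Qf_def)
  ultimately show "(1 - exp (-1)) * sqrt eps / sqrt pi \<le> ue (0, 1) + e"
    using main \<rho> \<gamma> unfolding \<theta>_def by linarith
qed

lemma lip_loc_cont: assumes "lip_loc F" shows "continuous_on UNIV F"
proof -
  have "continuous (at x) F" for x
  proof -
    obtain r L where r: "0 < r" and L: "L-lipschitz_on (cball x r) F"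
      using assms unfolding lip_loc_def by blast
    have "continuous_on (cball x r) F" by (rule lipschitz_on_continuous_on[OF L])
    moreover have "x \<in> interior (cball x r)" using r by simp
    ultimately show ?thesis by (rule continuous_on_interior)
  qed
  then show ?thesis by (simp add: continuous_at_imp_continuous_on)
qed

lemma powr_bernoulli:
  fixes m p :: real
  assumes m: "1 < m" and p: "0 \<le> p" "p \<le> 1"
  shows "p - (1 - 1/m) \<le> (1/m) * p powr m"
proof (cases "p = 0")
  case True then show ?thesis using m by simp
next
  case False
  then have p0: "0 < p" using p by simp
  define f where "f q = (1/m) * q powr m - q" for q :: real
  have "f 1 \<le> f p"
  proof (rule DERIV_nonpos_imp_nonincreasing[OF p(2)])
    fix x assume x: "p \<le> x" "x \<le> 1"
    then have x0: "0 < x" using p0 by simp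
    have d1: "((\<lambda>z. (1/m) * z powr m) has_real_derivative (1/m) * (m * x powr (m - 1))) (at x)"
      by (rule DERIV_cmult[OF has_real_derivative_powr[OF x0]])
    have "(f has_real_derivative (1/m) * (m * x powr (m - 1)) - 1) (at x)"
      unfolding f_def[abs_def] by (rule DERIV_diff[OF d1 DERIV_ident])
    moreover have "x powr (m - 1) \<le> 1" using x x0 m by (intro powr_le1) auto
    then have "(1/m) * (m * x powr (m - 1)) - 1 \<le> 0" using m by simp
    ultimately show "\<exists>y. (f has_real_derivative y) (at x) \<and> y \<le> 0" by blast
  qed
  then show ?thesis by (simp add: f_def)
qed

lemma powr_le_self:
  fixes m p :: real
  assumes m: "1 < m" and p: "0 \<le> p" "p \<le> 1"
  shows "(1/m) * p powr m \<le> p"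
proof (cases "p = 0")
  case True then show ?thesis by simp
next
  case False
  then have p0: "0 < p" using p by simp
  have "p powr m = p powr (1 + (m - 1))" by simp
  also have "\<dots> = p powr 1 * p powr (m - 1)" by (rule powr_add)
  also have "\<dots> = p * p powr (m - 1)" using p0 by simp
  also have "\<dots> \<le> p * 1" using p0 p m by (intro mult_left_mono powr_le1) auto
  finally have a: "p powr m \<le> p" by simp
  have "(1/m) * p powr m \<le> 1 * p powr m" using m by (intro mult_right_mono) auto
  then show ?thesis using a by simp
qed

theorem proposition4p3:
  fixes eps m :: real and F g :: "real \<Rightarrow> real" and ueps u :: "real \<times> real \<Rightarrow> real"
  assumes "0 < eps" "eps < 1/4"
    and "m > 1"
    and "1 - 1/m \<le> (exp 1 - 1) / (2 * sqrt pi * exp 1) * sqrt eps"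
    and "lip_loc F"
    and "\<forall>p\<in>{0..1}. F p = (1/m) * p powr m"
    and "\<forall>p\<in>{-1..0}. F p \<le> p"
    and "\<forall>x. g x = max (1 - \<bar>x\<bar>) 0"
    and "visc_sol_viscous eps F g ueps"
    and "visc_sol_HJ F g u"
  shows "\<bar>ueps (0, 1) - u (0, 1)\<bar> \<ge> (exp 1 - 1) / (2 * sqrt pi * exp 1) * sqrt eps"
proof -
  define \<delta> where "\<delta> = 1 - 1/m"
  have \<delta>0: "0 \<le> \<delta>" using assms(3) by (simp add: \<delta>_def)
  have Fc: "continuous_on UNIV F" by (rule lip_loc_cont[OF assms(5)])
  have Fge: "\<forall>p\<in>{0..1}. p - \<delta> \<le> F p"
    using assms(6) powr_bernoulli[OF assms(3)] by (auto simp: \<delta>_def)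
  have Fle: "\<forall>p\<in>{-1..1}. F p \<le> p"
  proof
    fix p :: real assume p: "p \<in> {-1..1}"
    show "F p \<le> p"
    proof (cases "0 \<le> p")
      case True then show ?thesis using assms(6) powr_le_self[OF assms(3)] p by auto
    next
      case False then show ?thesis using assms(7) p by auto
    qed
  qed
  have subu: "visc_subsol_HJ F u" and ccu: "cauchy_class g u"
    using assms(10) unfolding visc_sol_HJ_def by auto
  have supe: "visc_supersol_viscous eps F ueps" and cce: "cauchy_class g ueps"
    using assms(9) unfolding visc_sol_viscous_def by auto
  have U: "u (0, 1) \<le> \<delta>" by (rule u_upper[OF subu ccu assms(8) Fc Fge \<delta>0])
  have E: "(1 - exp (-1)) * sqrt eps / sqrt pi \<le> ueps (0, 1)"
    by (rule ue_lower[OF supe cce assms(8) assms(1) assms(2) Fc Fle])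
  define c where "c = (exp 1 - 1) / (2 * sqrt pi * exp 1)"
  have "(1 - exp (-1)) * sqrt eps / sqrt pi = 2 * (c * sqrt eps)"
    by (simp add: c_def exp_minus field_simps)
  then have "2 * (c * sqrt eps) - \<delta> \<le> ueps (0, 1) - u (0, 1)" using E U by linarith
  moreover have "\<delta> \<le> c * sqrt eps" using assms(4) by (simp add: \<delta>_def c_def)
  ultimately have "c * sqrt eps \<le> ueps (0, 1) - u (0, 1)" by linarith
  then show ?thesis unfolding c_def by linarith
qed

end
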